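(* Let $n$ be even and let $j$ be a positive integer with $\eta := j/n \leq 1/10$. Let $H = J(n,n/2,j)$, let $A$ be its adjacency matrix, let $d = {n/2 \choose j}^2$ (the degree of the regular graph $H$), and let $\tilde{L} = I - A/d$ be the normalised Laplacian of $H$, where $I$ is the ${n \choose n/2}\times{n \choose n/2}$ identity matrix. Let $\tilde{\mu}_1 \leq \tilde{\mu}_2 \leq \dots \leq \tilde{\mu}_{{n \choose n/2}}$ be the eigenvalues of $\tilde{L}$ in increasing order, counted with multiplicity (so $\tilde{\mu}_1 = 0$). Then $$\tilde{\mu}_2 \geq \eta/2.$$
   Context: For $1 \leq j \leq k \leq n$, the Johnson graph $J(n,k,j)$ has vertex set ${[n] \choose k}$ (the $k$-element subsets of $[n]=\{1,\dots,n\}$), with two $k$-sets joined by an edge iff their symmetric difference has size $2j$. *)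

theory Defs
  imports "Jordan_Normal_Form.Char_Poly" "HOL-Library.Multiset"
begin

definition johnson_vertices :: "nat \<Rightarrow> nat \<Rightarrow> nat set set" where
  "johnson_vertices n k = {S. S \<subseteq> {1..n} \<and> card S = k}"

definition johnson_adj :: "nat \<Rightarrow> nat set \<Rightarrow> nat set \<Rightarrow> bool" where
  "johnson_adj j S T \<longleftrightarrow> card ((S - T) \<union> (T - S)) = 2 * j"

text \<open>Adjacency matrix of J(n,k,j) with respect to an enumeration e of the vertices
  by the indices 0..<card(vertices).\<close>
definition johnson_adj_mat :: "nat \<Rightarrow> nat \<Rightarrow> nat \<Rightarrow> (nat \<Rightarrow> nat set) \<Rightarrow> real mat" where
  "johnson_adj_mat n k j e =
     mat (card (johnson_vertices n k)) (card (johnson_vertices n k))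
       (\<lambda>(a, b). if johnson_adj j (e a) (e b) then 1 else 0)"

text \<open>es is the list of eigenvalues of A counted with multiplicity, i.e. the characteristic
  polynomial of A splits over the reals as the product of (x - a) for a in es.\<close>
definition eigenvalue_list :: "real mat \<Rightarrow> real list \<Rightarrow> bool" where
  "eigenvalue_list A es \<longleftrightarrow> char_poly A = prod_list (map (\<lambda>a. [:- a, 1:]) es)"

end

theory Submission
  imports Defs "Jordan_Normal_Form.Schur_Decomposition"
begin

definition oneswap :: "nat set \<Rightarrow> nat set \<Rightarrow> bool" where
  "oneswap X Y \<longleftrightarrow> (\<exists>x y. x \<in> X \<and> y \<notin> X \<and> Y = insert y (X - {x}))"

lemma jv_finite: "finite (johnson_vertices n k)"
proof -
  have "johnson_vertices n k \<subseteq> Pow {1..n}" by (auto simp: johnson_vertices_def)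
  thus ?thesis by (rule finite_subset) simp
qed

lemma jv_memD: "X \<in> johnson_vertices n k \<Longrightarrow> X \<subseteq> {1..n} \<and> card X = k \<and> finite X"
  by (auto simp: johnson_vertices_def intro: finite_subset)

lemma conn_aux:
  assumes H: "\<forall>X\<in>johnson_vertices n k. \<forall>Y\<in>johnson_vertices n k. oneswap X Y \<longrightarrow> f X = f Y"
  shows "X \<in> johnson_vertices n k \<Longrightarrow> Y \<in> johnson_vertices n k \<Longrightarrow> card (X - Y) = m \<Longrightarrow> f X = f Y"
proof (induction m arbitrary: X)
  case 0
  then have "X \<subseteq> Y" using jv_memD[OF 0(1)] by auto
  moreover have "card X = card Y" "finite Y" using jv_memD[OF 0(1)] jv_memD[OF 0(2)] by auto
  ultimately have "X = Y" by (simp add: card_subset_eq)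
  then show ?case by simp
next
  case (Suc m)
  obtain a where a: "a \<in> X - Y" using Suc(4) by (metis card.empty ex_in_conv nat.distinct(1))
  have fx: "finite X" "finite Y" "card X = card Y" using jv_memD[OF Suc(2)] jv_memD[OF Suc(3)] by auto
  have "card (X - Y) = card (Y - X)"
  proof -
    have "card (X - Y) = card X - card (X \<inter> Y)" using fx by (metis card_Diff_subset_Int finite_Int)
    moreover have "card (Y - X) = card Y - card (X \<inter> Y)" using fx
      by (metis Int_commute card_Diff_subset_Int finite_Int)
    ultimately show ?thesis using fx by simp
  qed
  then obtain b where b: "b \<in> Y - X" using Suc(4) by (metis card.empty ex_in_conv nat.distinct(1))
  define X1 where "X1 = insert b (X - {a})"
  have "card X > 0" using a fx by (auto simp: card_gt_0_iff)
  then have X1V: "X1 \<in> johnson_vertices n k"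
    using jv_memD[OF Suc(2)] jv_memD[OF Suc(3)] a b
    by (auto simp: X1_def johnson_vertices_def card_insert_if)
  have os: "oneswap X X1" unfolding oneswap_def X1_def using a b by blast
  have "X1 - Y = (X - Y) - {a}" using a b by (auto simp: X1_def)
  then have "card (X1 - Y) = m" using Suc(4) a fx by simp
  then have "f X1 = f Y" using Suc.IH[OF X1V Suc(3)] by simp
  moreover have "f X = f X1" using H Suc(2) X1V os by blast
  ultimately show ?case by simp
qed

lemma conn:
  assumes H: "\<forall>X\<in>johnson_vertices n k. \<forall>Y\<in>johnson_vertices n k. oneswap X Y \<longrightarrow> f X = f Y"
  and "X \<in> johnson_vertices n k" "Y \<in> johnson_vertices n k"
  shows "f X = f Y"
  using conn_aux[OF H assms(2,3) refl] .

definition sw :: "nat \<Rightarrow> nat \<Rightarrow> nat \<Rightarrow> nat" where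
  "sw a b x = (if x = a then b else if x = b then a else x)"

lemma sw_sw[simp]: "sw a b (sw a b x) = x" by (auto simp: sw_def)
lemma sw_inj: "inj_on (sw a b) X" by (metis inj_on_inverseI sw_sw)
lemma Phi_Phi[simp]: "sw a b ` (sw a b ` X) = X"
  by (simp add: image_comp comp_def)
lemma Phi_fix: "(a \<in> X \<longleftrightarrow> b \<in> X) \<Longrightarrow> sw a b ` X = X"
  by (auto simp: sw_def image_def)
lemma Phi_one: "a \<in> X \<Longrightarrow> b \<notin> X \<Longrightarrow> sw a b ` X = insert b (X - {a})"
  by (auto simp: sw_def image_def)
lemma Phi_one': "b \<in> X \<Longrightarrow> a \<notin> X \<Longrightarrow> sw a b ` X = insert a (X - {b})"
  by (auto simp: sw_def image_def)
lemma Phi_card[simp]: "card (sw a b ` X) = card X"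
  by (rule card_image[OF sw_inj])
lemma Phi_diff: "sw a b ` X - sw a b ` Y = sw a b ` (X - Y)"
  by (rule image_set_diff[symmetric]) (metis inj_on_inverseI sw_sw)
lemma Phi_adj: "johnson_adj j (sw a b ` X) (sw a b ` Y) = johnson_adj j X Y"
  unfolding johnson_adj_def Phi_diff image_Un[symmetric] Phi_card ..
lemma Phi_V: "a \<in> {1..n} \<Longrightarrow> b \<in> {1..n} \<Longrightarrow> X \<in> johnson_vertices n k \<Longrightarrow>
   sw a b ` X \<in> johnson_vertices n k"
proof -
  assume a: "a \<in> {1..n}" and b: "b \<in> {1..n}" and X: "X \<in> johnson_vertices n k"
  have "sw a b ` X \<subseteq> {1..n}" using a b X by (auto simp: johnson_vertices_def sw_def)
  then show ?thesis using X by (simp add: johnson_vertices_def)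
qed

lemma card_diff_adj:
  assumes "S \<in> johnson_vertices n k" "S' \<in> johnson_vertices n k" "johnson_adj j S S'"
  shows "card (S - S') = j \<and> card (S' - S) = j"
proof -
  have fx: "finite S" "finite S'" "card S = card S'" using jv_memD[OF assms(1)] jv_memD[OF assms(2)] by auto
  have "card (S - S') = card S - card (S \<inter> S')" using fx by (metis card_Diff_subset_Int finite_Int)
  moreover have "card (S' - S) = card S' - card (S \<inter> S')" using fx
    by (metis Int_commute card_Diff_subset_Int finite_Int)
  ultimately have eq: "card (S - S') = card (S' - S)" using fx by simp
  have "card ((S - S') \<union> (S' - S)) = card (S - S') + card (S' - S)"
    by (rule card_Un_disjoint) (use fx in auto)
  with assms(3) eq show ?thesis unfolding johnson_adj_def by simp
qed

definition nbr :: "nat \<Rightarrow> nat \<Rightarrow> nat \<Rightarrow> nat set \<Rightarrow> nat set set" where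
  "nbr n k j S = {T \<in> johnson_vertices n k. johnson_adj j S T}"

lemma nbr_finite: "finite (nbr n k j S)"
  unfolding nbr_def using jv_finite by simp

lemma lip:
  fixes f :: "nat set \<Rightarrow> real"
  assumes SV: "S \<in> johnson_vertices n k" and aS: "a \<in> S" and bn: "b \<in> {1..n}" and bS: "b \<notin> S"
    and M: "\<forall>X\<in>johnson_vertices n k. \<forall>Y\<in>johnson_vertices n k. oneswap X Y \<longrightarrow> \<bar>f X - f Y\<bar> \<le> M"
  shows "\<bar>sum f (nbr n k j S) - sum f (nbr n k j (insert b (S - {a})))\<bar>
      \<le> M * card {S' \<in> nbr n k j S. (a \<in> S' \<longleftrightarrow> b \<notin> S')}"
proof -
  let ?V = "johnson_vertices n k"
  let ?p = "\<lambda>X. sw a b ` X"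
  have an: "a \<in> {1..n}" using SV aS by (auto simp: johnson_vertices_def)
  have pS: "?p S = insert b (S - {a})" using Phi_one[OF aS bS] .
  have bij: "bij_betw ?p (nbr n k j S) (nbr n k j (?p S))"
  proof (rule bij_betw_byWitness[where f' = ?p])
    show "\<forall>x\<in>nbr n k j S. ?p (?p x) = x" by simp
    show "\<forall>x\<in>nbr n k j (?p S). ?p (?p x) = x" by simp
    show "?p ` nbr n k j S \<subseteq> nbr n k j (?p S)"
      using Phi_V[OF an bn] by (auto simp: nbr_def Phi_adj)
    show "?p ` nbr n k j (?p S) \<subseteq> nbr n k j S"
    proof
      fix Y assume "Y \<in> ?p ` nbr n k j (?p S)"
      then obtain X where X: "X \<in> nbr n k j (?p S)" "Y = ?p X" by auto
      then have "X \<in> ?V" "johnson_adj j (?p S) X" by (auto simp: nbr_def)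
      then have "?p X \<in> ?V" "johnson_adj j (?p (?p S)) (?p X)" using Phi_V[OF an bn] Phi_adj by blast+
      then show "Y \<in> nbr n k j S" using X by (simp add: nbr_def)
    qed
  qed
  have "sum f (nbr n k j (?p S)) = sum (f \<circ> ?p) (nbr n k j S)"
    using sum.reindex_bij_betw[OF bij, of f] by simp
  then have eq: "sum f (nbr n k j S) - sum f (nbr n k j (insert b (S - {a})))
     = (\<Sum>X\<in>nbr n k j S. f X - f (?p X))" by (simp add: pS sum_subtractf)
  let ?E = "{S' \<in> nbr n k j S. (a \<in> S' \<longleftrightarrow> b \<notin> S')}"
  have "(\<Sum>X\<in>nbr n k j S. f X - f (?p X)) = (\<Sum>X\<in>?E. f X - f (?p X))"
  proof (rule sum.mono_neutral_right)
    show "finite (nbr n k j S)" by (rule nbr_finite)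
    show "?E \<subseteq> nbr n k j S" by auto
    show "\<forall>i\<in>nbr n k j S - ?E. f i - f (?p i) = 0"
      using Phi_fix by auto
  qed
  also have "\<bar>\<dots>\<bar> \<le> (\<Sum>X\<in>?E. \<bar>f X - f (?p X)\<bar>)" by (rule sum_abs)
  also have "\<dots> \<le> (\<Sum>X\<in>?E. M)"
  proof (rule sum_mono)
    fix X assume X: "X \<in> ?E"
    then have XV: "X \<in> ?V" by (auto simp: nbr_def)
    have "oneswap X (?p X)"
    proof (cases "a \<in> X")
      case True
      then have "b \<notin> X" using X by auto
      then show ?thesis using True Phi_one[OF True] unfolding oneswap_def by blast
    next
      case False
      then have "b \<in> X" using X by auto
      then show ?thesis using False Phi_one'[OF _ False] unfolding oneswap_def by blast
    qed
    then show "\<bar>f X - f (?p X)\<bar> \<le> M" using M XV Phi_V[OF an bn XV] by blast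
  qed
  also have "\<dots> = M * card ?E" by simp
  finally show ?thesis using eq by simp
qed

lemma count_E:
  assumes SV: "S \<in> johnson_vertices n k" and aS: "a \<in> S" and bn: "b \<in> {1..n}" and bS: "b \<notin> S"
    and j: "j > 0"
  shows "card {S' \<in> nbr n k j S. (a \<in> S' \<longleftrightarrow> b \<notin> S')}
     \<le> ((k - 1) choose j) * ((n - k - 1) choose j) + ((k - 1) choose (j - 1)) * ((n - k - 1) choose (j - 1))"
proof -
  let ?V = "johnson_vertices n k"
  have S: "S \<subseteq> {1..n}" "card S = k" "finite S" using jv_memD[OF SV] by auto
  let ?E1 = "{S' \<in> nbr n k j S. a \<in> S' \<and> b \<notin> S'}"
  let ?E2 = "{S' \<in> nbr n k j S. a \<notin> S' \<and> b \<in> S'}"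
  have Eeq: "{S' \<in> nbr n k j S. (a \<in> S' \<longleftrightarrow> b \<notin> S')} = ?E1 \<union> ?E2" by auto
  have fin: "finite ?E1" "finite ?E2" using nbr_finite by auto
  let ?R1 = "{R. R \<subseteq> S - {a} \<and> card R = j}"
  let ?Q1 = "{Q. Q \<subseteq> {1..n} - S - {b} \<and> card Q = j}"
  let ?R2 = "{R. R \<subseteq> S - {a} \<and> card R = j - 1}"
  let ?Q2 = "{Q. Q \<subseteq> {1..n} - S - {b} \<and> card Q = j - 1}"
  have cSa: "card (S - {a}) = k - 1" using S aS by simp
  have cnb: "card ({1..n} - S - {b}) = n - k - 1"
  proof -
    have "card ({1..n} - S) = n - k" using S by (simp add: card_Diff_subset)
    then show ?thesis using bn bS by simp
  qed
  have cR1: "card ?R1 = (k - 1) choose j" using n_subsets[of "S - {a}" j] S cSa by simp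
  have cR2: "card ?R2 = (k - 1) choose (j - 1)" using n_subsets[of "S - {a}" "j - 1"] S cSa by simp
  have cQ1: "card ?Q1 = (n - k - 1) choose j" using n_subsets[of "{1..n} - S - {b}" j] cnb by simp
  have cQ2: "card ?Q2 = (n - k - 1) choose (j - 1)" using n_subsets[of "{1..n} - S - {b}" "j - 1"] cnb by simp
  have finRQ: "finite (?R1 \<times> ?Q1)" "finite (?R2 \<times> ?Q2)"
    using S by (auto intro!: finite_cartesian_product)
  have "card ?E1 \<le> card (?R1 \<times> ?Q1)"
  proof (rule card_inj_on_le[where f = "\<lambda>S'. (S - S', S' - S)"])
    show "inj_on (\<lambda>S'. (S - S', S' - S)) ?E1"
    proof (rule inj_onI)
      fix X Y assume "X \<in> ?E1" "Y \<in> ?E1" and h: "(S - X, X - S) = (S - Y, Y - S)"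
      have "X = (S - (S - X)) \<union> (X - S)" "Y = (S - (S - Y)) \<union> (Y - S)" by auto
      then show "X = Y" using h by (metis prod.inject)
    qed
    show "(\<lambda>S'. (S - S', S' - S)) ` ?E1 \<subseteq> ?R1 \<times> ?Q1"
    proof
      fix Z assume "Z \<in> (\<lambda>S'. (S - S', S' - S)) ` ?E1"
      then obtain X where X: "X \<in> ?E1" "Z = (S - X, X - S)" by auto
      then have XV: "X \<in> ?V" and adj: "johnson_adj j S X" by (auto simp: nbr_def)
      have c: "card (S - X) = j" "card (X - S) = j" using card_diff_adj[OF SV XV adj] by auto
      have "X \<subseteq> {1..n}" using jv_memD[OF XV] by auto
      then show "Z \<in> ?R1 \<times> ?Q1" using X c by auto
    qed
  qed (use finRQ in auto)
  moreover have "card ?E2 \<le> card (?R2 \<times> ?Q2)"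
  proof (rule card_inj_on_le[where f = "\<lambda>S'. (S - S' - {a}, S' - S - {b})"])
    show "inj_on (\<lambda>S'. (S - S' - {a}, S' - S - {b})) ?E2"
    proof (rule inj_onI)
      fix X Y assume X: "X \<in> ?E2" and Y: "Y \<in> ?E2" and h: "(S - X - {a}, X - S - {b}) = (S - Y - {a}, Y - S - {b})"
      have "X = (S - insert a (S - X - {a})) \<union> insert b (X - S - {b})" using X aS bS by auto
      moreover have "Y = (S - insert a (S - Y - {a})) \<union> insert b (Y - S - {b})" using Y aS bS by auto
      ultimately show "X = Y" using h by (metis prod.inject)
    qed
    show "(\<lambda>S'. (S - S' - {a}, S' - S - {b})) ` ?E2 \<subseteq> ?R2 \<times> ?Q2"
    proof
      fix Z assume "Z \<in> (\<lambda>S'. (S - S' - {a}, S' - S - {b})) ` ?E2"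
      then obtain X where X: "X \<in> ?E2" "Z = (S - X - {a}, X - S - {b})" by auto
      then have XV: "X \<in> ?V" and adj: "johnson_adj j S X" by (auto simp: nbr_def)
      have c: "card (S - X) = j" "card (X - S) = j" using card_diff_adj[OF SV XV adj] by auto
      have fX: "finite X" using jv_memD[OF XV] by auto
      have "card (S - X - {a}) = j - 1" using c X aS S by simp
      moreover have "card (X - S - {b}) = j - 1" using c X bS fX by simp
      moreover have "X \<subseteq> {1..n}" using jv_memD[OF XV] by auto
      ultimately show "Z \<in> ?R2 \<times> ?Q2" using X by auto
    qed
  qed (use finRQ in auto)
  ultimately have "card ?E1 + card ?E2 \<le> card (?R1 \<times> ?Q1) + card (?R2 \<times> ?Q2)" by simp
  moreover have "card (?E1 \<union> ?E2) \<le> card ?E1 + card ?E2" by (rule card_Un_le)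
  ultimately show ?thesis unfolding Eeq card_cartesian_product cR1 cR2 cQ1 cQ2 by simp
qed

lemma arith_bound:
  fixes k j :: nat
  assumes j: "j > 0" and jk: "10 * j \<le> 2 * k"
  shows "real (((k - 1) choose j) * ((k - 1) choose j) + ((k - 1) choose (j - 1)) * ((k - 1) choose (j - 1)))
     \<le> (1 - real j / real (2 * k) / 2) * real ((k choose j) ^ 2)"
proof -
  have k: "k > 0" "j \<le> k" using j jk by auto
  have e1: "real k * real ((k - 1) choose (j - 1)) = real j * real (k choose j)"
    using binomial_absorption[of "j - 1" k] j by (metis Suc_pred' of_nat_mult mult.commute)
  have e2: "real k * real ((k - 1) choose j) = real (k - j) * real (k choose j)"
    using binomial_absorb_comp[of k j] by (metis of_nat_mult mult.commute)
  define B where "B = real (k choose j)"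
  define x where "x = real ((k - 1) choose j)"
  define y where "y = real ((k - 1) choose (j - 1))"
  have kx: "x = real (k - j) * B / real k" using e2 k unfolding x_def B_def by (simp add: field_simps)
  have ky: "y = real j * B / real k" using e1 k unfolding y_def B_def by (simp add: field_simps)
  have kj: "real (k - j) = real k - real j" using k by simp
  have ineq: "(real k - real j)^2 + (real j)^2 \<le> (real k)^2 - real j * real k / 4"
  proof -
    have "8 * real j \<le> 7 * real k" using jk by linarith
    then have "real j * (8 * real j) \<le> real j * (7 * real k)" by (intro mult_left_mono) auto
    then show ?thesis by (simp add: power2_eq_square algebra_simps)
  qed
  have "x * x + y * y = ((real k - real j)^2 + (real j)^2) * B^2 / (real k)^2"
    unfolding kx ky kj using k by (simp add: power2_eq_square field_simps)
  also have "\<dots> \<le> ((real k)^2 - real j * real k / 4) * B^2 / (real k)^2"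
    by (intro divide_right_mono mult_right_mono ineq) auto
  also have "\<dots> = (1 - real j / real (2 * k) / 2) * B^2"
    using k by (simp add: power2_eq_square field_simps)
  finally show ?thesis unfolding x_def y_def B_def by simp
qed

lemma const_of_eig:
  fixes f :: "nat set \<Rightarrow> real" and lam c0 C :: real
  assumes eig: "\<forall>S\<in>johnson_vertices n k. sum f (nbr n k j S) = lam * f S + c0"
    and j: "j > 0"
    and C: "real (((k - 1) choose j) * ((n - k - 1) choose j) + ((k - 1) choose (j - 1)) * ((n - k - 1) choose (j - 1))) \<le> C"
    and lam: "\<bar>lam\<bar> > C"
  shows "\<forall>X\<in>johnson_vertices n k. \<forall>Y\<in>johnson_vertices n k. f X = f Y"
proof (rule ccontr)
  let ?V = "johnson_vertices n k"
  assume "\<not> ?thesis"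
  then obtain X Y where XY: "X \<in> ?V" "Y \<in> ?V" "f X \<noteq> f Y" by blast
  have "\<not> (\<forall>X\<in>?V. \<forall>Y\<in>?V. oneswap X Y \<longrightarrow> f X = f Y)"
    using conn[of n k f X Y] XY by blast
  then obtain X1 Y1 where XY1: "X1 \<in> ?V" "Y1 \<in> ?V" "oneswap X1 Y1" "f X1 \<noteq> f Y1" by blast
  let ?P = "{(X, Y). X \<in> ?V \<and> Y \<in> ?V \<and> oneswap X Y}"
  let ?D = "(\<lambda>(X, Y). \<bar>f X - f Y\<bar>) ` ?P"
  have finP: "finite ?P"
    by (rule finite_subset[of _ "?V \<times> ?V"]) (auto simp: jv_finite)
  have finD: "finite ?D" using finP by simp
  have inP: "(X1, Y1) \<in> ?P" using XY1 by simp
  define M where "M = Max ?D"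
  have Mge: "\<bar>f X - f Y\<bar> \<le> M" if "(X, Y) \<in> ?P" for X Y
    unfolding M_def using finD that by (intro Max_ge) force+
  have Mpos: "M > 0" using Mge[OF inP] XY1(4) by simp
  have "M \<in> ?D" unfolding M_def using finD inP by (intro Max_in) auto
  then obtain X0 Y0 where P0: "(X0, Y0) \<in> ?P" and M0: "M = \<bar>f X0 - f Y0\<bar>" by auto
  then have X0V: "X0 \<in> ?V" and Y0V: "Y0 \<in> ?V" and os: "oneswap X0 Y0" by auto
  then obtain a b where ab: "a \<in> X0" "b \<notin> X0" "Y0 = insert b (X0 - {a})"
    unfolding oneswap_def by blast
  have bn: "b \<in> {1..n}" using Y0V ab by (auto simp: johnson_vertices_def)
  have Mall: "\<forall>X\<in>?V. \<forall>Y\<in>?V. oneswap X Y \<longrightarrow> \<bar>f X - f Y\<bar> \<le> M" using Mge by blast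
  have "\<bar>sum f (nbr n k j X0) - sum f (nbr n k j Y0)\<bar>
      \<le> M * card {S' \<in> nbr n k j X0. (a \<in> S' \<longleftrightarrow> b \<notin> S')}"
    using lip[OF X0V ab(1) bn ab(2) Mall, of j] ab(3) by simp
  also have "\<dots> \<le> M * C"
    using count_E[OF X0V ab(1) bn ab(2) j] C Mpos
    by (intro mult_left_mono) (auto intro: order_trans[OF of_nat_mono])
  finally have h: "\<bar>sum f (nbr n k j X0) - sum f (nbr n k j Y0)\<bar> \<le> M * C" .
  have "sum f (nbr n k j X0) - sum f (nbr n k j Y0) = lam * (f X0 - f Y0)"
    using eig X0V Y0V by (simp add: algebra_simps)
  then have "\<bar>lam\<bar> * M \<le> M * C" using h M0 by (simp add: abs_mult)
  then have "\<bar>lam\<bar> \<le> C" using Mpos by (simp add: mult.commute)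
  then show False using lam by simp
qed

lemma adj_mat_carrier: "johnson_adj_mat n k j e \<in> carrier_mat (card (johnson_vertices n k)) (card (johnson_vertices n k))"
  by (simp add: johnson_adj_mat_def)

lemma adj_mat_mult:
  assumes e: "bij_betw e {0..<card (johnson_vertices n k)} (johnson_vertices n k)"
    and v: "v \<in> carrier_vec (card (johnson_vertices n k))"
    and i: "i < card (johnson_vertices n k)"
  shows "(johnson_adj_mat n k j e *\<^sub>v v) $ i =
     sum (\<lambda>S. v $ (inv_into {0..<card (johnson_vertices n k)} e S)) (nbr n k j (e i))"
proof -
  let ?N = "card (johnson_vertices n k)"
  let ?V = "johnson_vertices n k"
  define f where "f = (\<lambda>S. v $ (inv_into {0..<?N} e S))"
  have inj: "inj_on e {0..<?N}" using e by (rule bij_betw_imp_inj_on)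
  have fe: "f (e l) = v $ l" if "l < ?N" for l
    unfolding f_def using inv_into_f_f[OF inj] that by simp
  have "(johnson_adj_mat n k j e *\<^sub>v v) $ i = (\<Sum>l\<in>{0..<?N}. (if johnson_adj j (e i) (e l) then 1 else 0) * v $ l)"
    using i v by (simp add: johnson_adj_mat_def mult_mat_vec_def scalar_prod_def row_def)
  also have "\<dots> = (\<Sum>l\<in>{0..<?N}. (\<lambda>T. (if johnson_adj j (e i) T then 1 else 0) * f T) (e l))"
    by (rule sum.cong) (auto simp: fe)
  also have "\<dots> = (\<Sum>T\<in>?V. (if johnson_adj j (e i) T then 1 else 0) * f T)"
    by (rule sum.reindex_bij_betw[OF e])
  also have "\<dots> = sum f (nbr n k j (e i))"
    unfolding nbr_def
  proof -
    have "(\<Sum>T\<in>?V. (if johnson_adj j (e i) T then 1 else 0) * f T) = (\<Sum>T\<in>?V. if johnson_adj j (e i) T then f T else 0)"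
      by (rule sum.cong) auto
    also have "\<dots> = sum f {T \<in> ?V. johnson_adj j (e i) T}" by (rule sum.inter_filter[OF jv_finite, symmetric])
    finally show "(\<Sum>T\<in>?V. (if johnson_adj j (e i) T then 1 else 0) * f T) = sum f {T \<in> ?V. johnson_adj j (e i) T}" .
  qed
  finally show ?thesis unfolding f_def .
qed


lemma sym_real_eig_real:
  fixes A :: "real mat" and a :: complex
  assumes A: "A \<in> carrier_mat n n" and sym: "\<forall>i<n. \<forall>l<n. A $$ (i, l) = A $$ (l, i)"
    and ev: "eigenvalue (map_mat complex_of_real A) a"
  shows "Im a = 0"
proof -
  let ?Ac = "map_mat complex_of_real A"
  obtain v where v: "v \<in> carrier_vec n" "v \<noteq> 0\<^sub>v n" "?Ac *\<^sub>v v = a \<cdot>\<^sub>v v"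
    using ev A unfolding eigenvalue_def eigenvector_def by auto
  have dv: "dim_vec v = n" using v by auto
  define s where "s = (\<Sum>i<n. cnj (v $ i) * (?Ac *\<^sub>v v) $ i)"
  define W where "W = (\<Sum>i<n. (cmod (v $ i))^2)"
  have s1: "s = a * complex_of_real W"
  proof -
    have "s = (\<Sum>i<n. a * (cnj (v $ i) * v $ i))" unfolding s_def v(3) using dv
      by (intro sum.cong) auto
    also have "\<dots> = a * (\<Sum>i<n. complex_of_real ((cmod (v $ i))^2))"
      unfolding complex_norm_square by (simp add: sum_distrib_left mult.commute)
    finally show ?thesis unfolding W_def of_real_sum by simp
  qed
  have s2: "s = (\<Sum>i<n. \<Sum>l<n. cnj (v $ i) * complex_of_real (A $$ (i, l)) * v $ l)"
    unfolding s_def using A dv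
    by (intro sum.cong) (auto simp: scalar_prod_def row_def sum_distrib_left mult.assoc atLeast0LessThan)
  have "cnj s = (\<Sum>i<n. \<Sum>l<n. v $ i * complex_of_real (A $$ (i, l)) * cnj (v $ l))"
    unfolding s2 by simp
  also have "\<dots> = (\<Sum>l<n. \<Sum>i<n. v $ i * complex_of_real (A $$ (i, l)) * cnj (v $ l))"
    by (rule sum.swap)
  also have "\<dots> = s" unfolding s2 using sym
    by (intro sum.cong) (auto simp: mult.commute mult.left_commute)
  finally have cs: "cnj s = s" .
  have "W > 0"
  proof -
    obtain i where i: "i < n" "v $ i \<noteq> 0" using v dv by (metis eq_vecI index_zero_vec(1,2) dim_vec)
    have "(cmod (v $ i))^2 \<le> W" unfolding W_def
      using i by (intro member_le_sum) auto
    moreover have "(cmod (v $ i))^2 > 0" using i by simp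
    ultimately show ?thesis by linarith
  qed
  have "cnj a * complex_of_real W = a * complex_of_real W" using cs s1 by simp
  then have "cnj a = a" using \<open>W > 0\<close> by simp
  then have "Im (cnj a) = Im a" by simp
  then show ?thesis by simp
qed

lemma sym_real_splits:
  fixes A :: "real mat"
  assumes A: "A \<in> carrier_mat n n" and sym: "\<forall>i<n. \<forall>l<n. A $$ (i, l) = A $$ (l, i)"
  shows "\<exists>es. char_poly A = (\<Prod>a\<leftarrow>es. [:- a, 1:])"
proof -
  let ?Ac = "map_mat complex_of_real A"
  have Ac: "?Ac \<in> carrier_mat n n" using A by simp
  obtain as where cp: "char_poly ?Ac = (\<Prod>a\<leftarrow>as. [:- a, 1:])"
    using char_poly_factorized[OF Ac] by blast
  have re: "Im a = 0" if "a \<in> set as" for a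
  proof -
    have "poly (char_poly ?Ac) a = 0" unfolding cp poly_prod_list using that
      by (auto simp: prod_list_zero_iff)
    then have "eigenvalue ?Ac a" using eigenvalue_root_char_poly[OF Ac] by simp
    then show ?thesis using sym_real_eig_real[OF A sym] by simp
  qed
  define rs where "rs = map Re as"
  have asr: "as = map complex_of_real rs" unfolding rs_def using re
    by (induction as) (auto simp: complex_eq_iff)
  interpret m: map_poly_inj_idom_hom "of_real :: real \<Rightarrow> complex" ..
  have "map_poly complex_of_real (char_poly A) = char_poly ?Ac"
    by (rule of_real_hom.char_poly_hom[OF A, symmetric])
  also have "\<dots> = map_poly complex_of_real (\<Prod>a\<leftarrow>rs. [:- a, 1:])"
    unfolding cp asr m.hom_prod_list by (simp add: o_def)
  finally have "char_poly A = (\<Prod>a\<leftarrow>rs. [:- a, 1:])" by (rule m.injectivity)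
  then show ?thesis by blast
qed


lemma sum_two:
  fixes g :: "nat \<Rightarrow> real"
  assumes "2 \<le> N" "\<And>m. 2 \<le> m \<Longrightarrow> m < N \<Longrightarrow> g m = 0"
  shows "(\<Sum>m\<in>{0..<N}. g m) = g 0 + g 1"
proof -
  have "(\<Sum>m\<in>{0..<N}. g m) = (\<Sum>m\<in>{0,1}. g m)"
    by (rule sum.mono_neutral_right) (use assms in auto)
  then show ?thesis by simp
qed

lemma L_entry:
  fixes A :: "real mat"
  assumes A: "A \<in> carrier_mat N N" and p: "p \<in> carrier_vec N" and i: "i < N"
  shows "((1\<^sub>m N - s \<cdot>\<^sub>m A) *\<^sub>v p) $ i = p $ i - s * (A *\<^sub>v p) $ i"
proof -
  have "((1\<^sub>m N - s \<cdot>\<^sub>m A) *\<^sub>v p) $ i = (\<Sum>l\<in>{0..<N}. ((if i = l then 1 else 0) - s * A $$ (i, l)) * p $ l)"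
    using A p i by (simp add: scalar_prod_def row_def)
  also have "\<dots> = (\<Sum>l\<in>{0..<N}. (if i = l then p $ l else 0) - s * (A $$ (i, l) * p $ l))"
    by (rule sum.cong) (auto simp: algebra_simps)
  also have "\<dots> = (\<Sum>l\<in>{0..<N}. (if i = l then p $ l else 0)) - s * (\<Sum>l\<in>{0..<N}. A $$ (i, l) * p $ l)"
    by (simp add: sum_subtractf sum_distrib_left)
  also have "\<dots> = p $ i - s * (A *\<^sub>v p) $ i"
    using A p i by (simp add: scalar_prod_def row_def)
  finally show ?thesis .
qed

lemma P_inj_vec:
  fixes P Q :: "real mat"
  assumes P: "P \<in> carrier_mat N N" and Q: "Q \<in> carrier_mat N N" and QP: "Q * P = 1\<^sub>m N"
    and w: "w \<in> carrier_vec N" and Pw: "P *\<^sub>v w = 0\<^sub>v N"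
  shows "w = 0\<^sub>v N"
proof -
  have "w = (Q * P) *\<^sub>v w" using QP w by simp
  also have "\<dots> = Q *\<^sub>v (P *\<^sub>v w)" using P Q w by simp
  also have "\<dots> = 0\<^sub>v N" unfolding Pw using Q by (intro eq_vecI) (auto simp: scalar_prod_def)
  finally show ?thesis .
qed

theorem theorem2:
  fixes n j :: nat and e :: "nat \<Rightarrow> nat set"
  assumes "even n" and "n > 0" and "j > 0"
    and "real j / real n \<le> 1 / 10"
    and "bij_betw e {0..<card (johnson_vertices n (n div 2))} (johnson_vertices n (n div 2))"
  defines "N \<equiv> card (johnson_vertices n (n div 2))"
    and "d \<equiv> real (((n div 2) choose j) ^ 2)"
  defines "L \<equiv> 1\<^sub>m N - (1 / d) \<cdot>\<^sub>m johnson_adj_mat n (n div 2) j e"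
  shows "(\<exists>es. eigenvalue_list L es) \<and>
         (\<forall>es. eigenvalue_list L es \<longrightarrow> sort es ! 1 \<ge> (real j / real n) / 2)"
proof -
  define k where "k = n div 2"
  define A where "A = johnson_adj_mat n k j e"
  let ?V = "johnson_vertices n k"
  have nk: "n = 2 * k" using assms(1) unfolding k_def by simp
  have jn: "10 * j \<le> n"
  proof -
    have "real j * 10 \<le> real n" using assms(4) assms(2) by (simp add: field_simps)
    then show ?thesis by linarith
  qed
  have jk: "j \<le> k" "k \<ge> 1" using jn nk assms(3) by auto
  have dpos: "d > 0" unfolding d_def k_def[symmetric] using jk by simp
  have e: "bij_betw e {0..<N} ?V" using assms(5) unfolding N_def k_def .
  have NV: "N = card ?V" unfolding N_def k_def ..
  have A: "A \<in> carrier_mat N N" unfolding A_def NV by (rule adj_mat_carrier)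
  have LA: "L = 1\<^sub>m N - (1 / d) \<cdot>\<^sub>m A" unfolding L_def A_def k_def ..
  have Lc: "L \<in> carrier_mat N N" unfolding LA using A by (intro carrier_matI) auto
  have N2: "N \<ge> 2"
  proof -
    have "{1..k} \<in> ?V" "{2..k+1} \<in> ?V" using nk by (auto simp: johnson_vertices_def)
    moreover have "{1..k} \<noteq> {2..k+1}"
    proof
      assume "{1..k} = {2..k+1}"
      moreover have "(1::nat) \<in> {1..k}" using jk by simp
      ultimately show False by simp
    qed
    ultimately have "card {{1..k}, {2..k+1}} \<le> card ?V"
      by (intro card_mono jv_finite) auto
    then show ?thesis unfolding NV using \<open>{1..k} \<noteq> {2..k+1}\<close> by simp
  qed
  have Lsym: "\<forall>i<N. \<forall>l<N. L $$ (i, l) = L $$ (l, i)"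
  proof (intro allI impI)
    fix i l assume "i < N" "l < N"
    moreover have "johnson_adj j X Y = johnson_adj j Y X" for X Y
      unfolding johnson_adj_def by (simp add: Un_commute)
    ultimately show "L $$ (i, l) = L $$ (l, i)" using A unfolding LA A_def
      by (simp add: johnson_adj_mat_def NV)
  qed
  have eta: "real j / real n / 2 = real j / real (2 * k) / 2" using nk by simp
  have K: "\<forall>i<N. p $ i = p $ 0"
    if p: "p \<in> carrier_vec N" and mu: "mu < real j / real n / 2"
      and eq: "\<forall>i<N. (L *\<^sub>v p) $ i = mu * p $ i + c0" for p mu c0
  proof -
    define f where "f = (\<lambda>S. p $ (inv_into {0..<N} e S))"
    define lam where "lam = d * (1 - mu)"
    have inj: "inj_on e {0..<N}" using e by (rule bij_betw_imp_inj_on)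
    have fe: "f (e l) = p $ l" if "l < N" for l
      unfolding f_def using inv_into_f_f[OF inj] that by simp
    have eig: "\<forall>S\<in>?V. sum f (nbr n k j S) = lam * f S + (- d * c0)"
    proof
      fix S assume "S \<in> ?V"
      then obtain i where i: "i < N" "S = e i" using e unfolding bij_betw_def by (metis atLeastLessThan_iff imageE)
      have "(A *\<^sub>v p) $ i = sum f (nbr n k j S)"
        unfolding A_def f_def i(2) using adj_mat_mult[of e n k p i j] e p i NV by simp
      moreover have "p $ i - (1 / d) * (A *\<^sub>v p) $ i = mu * p $ i + c0"
        using eq i L_entry[OF A p i(1), of "1 / d"] unfolding LA by simp
      ultimately have "sum f (nbr n k j S) = d * ((1 - mu) * p $ i - c0)"
        using dpos by (simp add: field_simps)
      then show "sum f (nbr n k j S) = lam * f S + (- d * c0)"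
        unfolding lam_def using fe[OF i(1)] i(2) by (simp add: algebra_simps)
    qed
    define C where "C = (1 - real j / real n / 2) * d"
    have Cb: "real (((k - 1) choose j) * ((n - k - 1) choose j) + ((k - 1) choose (j - 1)) * ((n - k - 1) choose (j - 1))) \<le> C"
    proof -
      have "n - k - 1 = k - 1" using nk by simp
      then show ?thesis unfolding C_def eta d_def k_def[symmetric]
        using arith_bound[OF assms(3), of k] jn nk by simp
    qed
    have Cnn: "C \<ge> 0" unfolding C_def using dpos assms(2,4) by (simp add: field_simps)
    have "d * mu < d * (real j / real n / 2)" by (rule mult_strict_left_mono[OF mu dpos])
    then have "lam > C" unfolding lam_def C_def by (simp add: algebra_simps)
    then have lamC: "\<bar>lam\<bar> > C" using Cnn by simp
    have fc: "\<forall>X\<in>?V. \<forall>Y\<in>?V. f X = f Y" by (rule const_of_eig[OF eig assms(3) Cb lamC])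
    show ?thesis
    proof (intro allI impI)
      fix i assume i: "i < N"
      have "e i \<in> ?V" "e 0 \<in> ?V" using e i N2 unfolding bij_betw_def by auto
      then have "f (e i) = f (e 0)" using fc by blast
      then show "p $ i = p $ 0" using fe i N2 by simp
    qed
  qed
  show ?thesis
  proof
    show "\<exists>es. eigenvalue_list L es"
      unfolding eigenvalue_list_def using sym_real_splits[OF Lc Lsym] by simp
  next
    show "\<forall>es. eigenvalue_list L es \<longrightarrow> sort es ! 1 \<ge> (real j / real n) / 2"
    proof (intro allI impI)
      fix es assume "eigenvalue_list L es"
      then have cp: "char_poly L = (\<Prod>a\<leftarrow>es. [:- a, 1:])" unfolding eigenvalue_list_def by simp
      define es' where "es' = sort es"
      have cp': "char_poly L = (\<Prod>a\<leftarrow>es'. [:- a, 1:])" unfolding cp es'_def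
        by (simp only: prod_mset_prod_list[symmetric] mset_map mset_sort)
      have len: "length es' = N"
        using degree_monic_char_poly[OF Lc] degree_linear_factors[of uminus es'] cp' by simp
      obtain B P Q where sd: "schur_decomposition L es' = (B, P, Q)" by (cases "schur_decomposition L es'") auto
      from schur_decomposition[OF Lc cp' sd]
      have sim: "similar_mat_wit L B P Q" and ut: "upper_triangular B" and dg: "diag_mat B = es'" by auto
      have dL: "dim_row L = N" using Lc by simp
      have B: "B \<in> carrier_mat N N" and P: "P \<in> carrier_mat N N" and Q: "Q \<in> carrier_mat N N"
        and QP: "Q * P = 1\<^sub>m N" and LPBQ: "L = P * B * Q"
        using sim unfolding similar_mat_wit_def Let_def dL by auto
      have LP: "L * P = P * B"
      proof -
        have "L * P = P * B * (Q * P)" unfolding LPBQ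
          by (rule assoc_mult_mat[of "P * B" N N Q N P N]) (use P B Q in auto)
        also have "\<dots> = P * B" unfolding QP using P B by simp
        finally show ?thesis .
      qed
      have dgi: "B $$ (i, i) = es' ! i" if "i < N" for i
      proof -
        have "es' ! i = diag_mat B ! i" using dg by simp
        also have "\<dots> = B $$ (i, i)" using B that by (simp add: diag_mat_def)
        finally show ?thesis by simp
      qed
      have B00: "B $$ (0, 0) = es' ! 0" and B11: "B $$ (1, 1) = es' ! 1"
        using dgi N2 by auto
      have Bz: "B $$ (m, l) = 0" if "l < m" "m < N" for m l
        using ut that B unfolding upper_triangular_def by auto
      define p0 where "p0 = col P 0"
      define p1 where "p1 = col P 1"
      have p0c: "p0 \<in> carrier_vec N" and p1c: "p1 \<in> carrier_vec N" unfolding p0_def p1_def using P by auto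
      have Lp: "(L *\<^sub>v col P c) $ i = (P * B) $$ (i, c)" if "i < N" "c < N" for i c
      proof -
        have "(L *\<^sub>v col P c) $ i = (L * P) $$ (i, c)" using Lc P that by simp
        then show ?thesis using LP by simp
      qed
      have PB: "(P * B) $$ (i, c) = (\<Sum>m\<in>{0..<N}. P $$ (i, m) * B $$ (m, c))" if "i < N" "c < N" for i c
        using P B that by (simp add: scalar_prod_def)
      have sorted: "es' ! 0 \<le> es' ! 1" unfolding es'_def using len N2 
        by (intro sorted_nth_mono) (auto simp: es'_def)
      show "sort es ! 1 \<ge> (real j / real n) / 2"
      proof (rule ccontr)
        assume "\<not> ?thesis"
        then have small: "es' ! 1 < real j / real n / 2" unfolding es'_def by simp
        have eq0: "\<forall>i<N. (L *\<^sub>v p0) $ i = es' ! 0 * p0 $ i + 0"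
        proof (intro allI impI)
          fix i assume i: "i < N"
          have "(L *\<^sub>v p0) $ i = (\<Sum>m\<in>{0..<N}. P $$ (i, m) * B $$ (m, 0))"
            unfolding p0_def using Lp PB i N2 by simp
          also have "\<dots> = P $$ (i, 0) * B $$ (0, 0) + P $$ (i, 1) * B $$ (1, 0)"
            by (rule sum_two[OF N2]) (use Bz in auto)
          also have "\<dots> = es' ! 0 * p0 $ i" using Bz[of 0 1] N2 B00 i P unfolding p0_def by simp
          finally show "(L *\<^sub>v p0) $ i = es' ! 0 * p0 $ i + 0" by simp
        qed
        have small0: "es' ! 0 < real j / real n / 2" using sorted small by linarith
        have c0: "\<forall>i<N. p0 $ i = p0 $ 0" by (rule K[OF p0c small0 eq0])
        have eq1: "\<forall>i<N. (L *\<^sub>v p1) $ i = es' ! 1 * p1 $ i + B $$ (0, 1) * p0 $ 0"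
        proof (intro allI impI)
          fix i assume i: "i < N"
          have "(L *\<^sub>v p1) $ i = (\<Sum>m\<in>{0..<N}. P $$ (i, m) * B $$ (m, 1))"
            unfolding p1_def using Lp PB i N2 by simp
          also have "\<dots> = P $$ (i, 0) * B $$ (0, 1) + P $$ (i, 1) * B $$ (1, 1)"
            by (rule sum_two[OF N2]) (use Bz in auto)
          also have "\<dots> = es' ! 1 * p1 $ i + B $$ (0, 1) * p0 $ 0"
          proof -
            have "p0 $ i = P $$ (i, 0)" "p1 $ i = P $$ (i, 1)" using P i N2 unfolding p0_def p1_def by auto
            moreover have "p0 $ i = p0 $ 0" using c0 i by blast
            ultimately show ?thesis using B11 by (simp add: algebra_simps)
          qed
          finally show "(L *\<^sub>v p1) $ i = es' ! 1 * p1 $ i + B $$ (0, 1) * p0 $ 0" .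
        qed
        have c1: "\<forall>i<N. p1 $ i = p1 $ 0" by (rule K[OF p1c small eq1])
        define al where "al = p0 $ 0"
        define be where "be = p1 $ 0"
        define w where "w = vec N (\<lambda>i. if i = 0 then be else if i = 1 then - al else 0)"
        have wc: "w \<in> carrier_vec N" unfolding w_def by simp
        have "P *\<^sub>v w = 0\<^sub>v N"
        proof (rule eq_vecI)
          fix i assume "i < dim_vec (0\<^sub>v N :: real vec)"
          then have i: "i < N" by simp
          have "(P *\<^sub>v w) $ i = (\<Sum>m\<in>{0..<N}. P $$ (i, m) * w $ m)"
            using P wc i by (simp add: scalar_prod_def)
          also have "\<dots> = P $$ (i, 0) * w $ 0 + P $$ (i, 1) * w $ 1"
            by (rule sum_two[OF N2]) (auto simp: w_def)
          also have "\<dots> = 0"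
          proof -
            have "p0 $ i = P $$ (i, 0)" "p1 $ i = P $$ (i, 1)" using P i N2 unfolding p0_def p1_def by auto
            moreover have "p0 $ i = al" "p1 $ i = be" using c0 c1 i unfolding al_def be_def by blast+
            moreover have "w $ 0 = be" "w $ 1 = - al" using N2 unfolding w_def by auto
            ultimately show ?thesis by (simp add: algebra_simps)
          qed
          finally show "(P *\<^sub>v w) $ i = 0\<^sub>v N $ i" using i by simp
        qed (use P in simp)
        then have "w = 0\<^sub>v N" by (rule P_inj_vec[OF P Q QP wc])
        then have "w $ 1 = 0" using N2 by simp
        then have al0: "al = 0" unfolding w_def using N2 by simp
        define u :: "real vec" where "u = unit_vec N 0"
        have uc: "u \<in> carrier_vec N" unfolding u_def by simp
        have "P *\<^sub>v u = 0\<^sub>v N"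
        proof (rule eq_vecI)
          fix i assume "i < dim_vec (0\<^sub>v N :: real vec)"
          then have i: "i < N" by simp
          have "(P *\<^sub>v u) $ i = (\<Sum>m\<in>{0..<N}. P $$ (i, m) * u $ m)"
            using P uc i by (simp add: scalar_prod_def)
          also have "\<dots> = P $$ (i, 0) * u $ 0 + P $$ (i, 1) * u $ 1"
            by (rule sum_two[OF N2]) (use N2 in \<open>auto simp: u_def\<close>)
          also have "\<dots> = 0"
          proof -
            have "p0 $ i = P $$ (i, 0)" using P i N2 unfolding p0_def by auto
            moreover have "p0 $ i = al" using c0 i unfolding al_def by blast
            moreover have "u $ 0 = 1" "u $ 1 = 0" using N2 unfolding u_def by auto
            ultimately show ?thesis using al0 by simp
          qed
          finally show "(P *\<^sub>v u) $ i = 0\<^sub>v N $ i" using i by simp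
        qed (use P in simp)
        then have "u = 0\<^sub>v N" by (rule P_inj_vec[OF P Q QP uc])
        then have "u $ 0 = 0" using N2 by simp
        then show False unfolding u_def using N2 by simp
      qed
    qed
  qed
qed

end
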